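(* Let $X$ be a real Banach space. If $\Phi:X^*\to 2^X$ is $w^*$-maximal cyclically monotone with $D(\Phi)\neq\emptyset$, then there exists a proper convex weak$^*$-lower semicontinuous function $g:X^*\to(-\infty,+\infty]$ such that $\Phi(x^* )=\partial g(x^* )\cap X$ for every $x^*\in X^*$.
   Context: $X$ is identified with its canonical image in $X^{**}$; $\partial g(x^* )\cap X=\{x\in X:\langle y^*-x^*,x\rangle\le g(y^* )-g(x^* )\ \forall y^*\in X^*\}$ for $x^*\in\operatorname{dom} g$, empty otherwise. For $\Phi:X^*\to2^X$, $D(\Phi)=\{x^*:\Phi(x^* )\ne\emptyset\}$, $\mathrm{Gr}\,\Phi=\{(x^*,x):x\in\Phi(x^* )\}$. $\Phi$ is $w^*$-monotone if $\langle x-y,x^*-y^*\rangle\ge0$ whenever $x\in\Phi(x^* )$, $y\in\Phi(y^* )$. $\Phi$ is $w^*$-cyclically monotone if for every $n\ge2$, all $x_1^*,\dots,x_n^*\in D(\Phi)$ with $x_{n+1}^*=x_1^*$ and all $x_k\in\Phi(x_k^* )$, $\sum_{k=1}^n\langle x_k,x_k^*-x_{k+1}^*\rangle\ge0$. $\Phi$ is $w^*$-maximal cyclically monotone if it is $w^*$-monotone and $\Phi=\Psi$ whenever $\Psi$ is $w^*$-cyclically monotone with $\mathrm{Gr}\,\Phi\subset\mathrm{Gr}\,\Psi$. *)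

theory Defs
  imports "HOL-Analysis.Analysis"
begin

(* X is a real Banach space ('a::banach); X^* is the type of continuous linear functionals
   (blinfun); the pairing is blinfun_apply. Functions X^* -> (-inf,+inf] are ereal-valued. *)

definition wstar_topology :: "('a::real_normed_vector \<Rightarrow>\<^sub>L real) topology" where
  "wstar_topology = topology_generated_by
     {{xs. blinfun_apply xs x \<in> U} | x U. open (U::real set)}"

definition wstar_lsc :: "(('a::real_normed_vector \<Rightarrow>\<^sub>L real) \<Rightarrow> ereal) \<Rightarrow> bool" where
  "wstar_lsc g \<longleftrightarrow> (\<forall>c::ereal. closedin wstar_topology {xs. g xs \<le> c})"

definition proper_fun :: "('b \<Rightarrow> ereal) \<Rightarrow> bool" where
  "proper_fun g \<longleftrightarrow> (\<forall>x. g x \<noteq> -\<infinity>) \<and> (\<exists>x. g x \<noteq> \<infinity>)"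

definition convex_efun :: "('b::real_vector \<Rightarrow> ereal) \<Rightarrow> bool" where
  "convex_efun g \<longleftrightarrow> (\<forall>x y t. 0 < t \<and> t < 1 \<longrightarrow>
      g ((1 - t) *\<^sub>R x + t *\<^sub>R y) \<le> ereal (1 - t) * g x + ereal t * g y)"

definition subdiff_X :: "(('a::real_normed_vector \<Rightarrow>\<^sub>L real) \<Rightarrow> ereal) \<Rightarrow> ('a \<Rightarrow>\<^sub>L real) \<Rightarrow> 'a set" where
  "subdiff_X g xs = (if g xs < \<infinity> then
      {x. \<forall>ys. ereal (blinfun_apply (ys - xs) x) \<le> g ys - g xs} else {})"

definition wstar_monotone :: "(('a::real_normed_vector \<Rightarrow>\<^sub>L real) \<Rightarrow> 'a set) \<Rightarrow> bool" where
  "wstar_monotone \<Phi> \<longleftrightarrow> (\<forall>xs ys x y. x \<in> \<Phi> xs \<longrightarrow> y \<in> \<Phi> ys \<longrightarrow>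
      blinfun_apply (xs - ys) (x - y) \<ge> 0)"

(* cycles indexed 0..n-1, x^*_n = x^*_0 via mod n *)
definition wstar_cyclically_monotone :: "(('a::real_normed_vector \<Rightarrow>\<^sub>L real) \<Rightarrow> 'a set) \<Rightarrow> bool" where
  "wstar_cyclically_monotone \<Phi> \<longleftrightarrow> (\<forall>n::nat. \<forall>xs::nat \<Rightarrow> ('a \<Rightarrow>\<^sub>L real). \<forall>x::nat \<Rightarrow> 'a.
      n \<ge> 2 \<longrightarrow> (\<forall>k<n. x k \<in> \<Phi> (xs k)) \<longrightarrow>
      (\<Sum>k<n. blinfun_apply (xs k - xs (Suc k mod n)) (x k)) \<ge> 0)"

definition wstar_max_cyclically_monotone :: "(('a::real_normed_vector \<Rightarrow>\<^sub>L real) \<Rightarrow> 'a set) \<Rightarrow> bool" where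
  "wstar_max_cyclically_monotone \<Phi> \<longleftrightarrow> wstar_monotone \<Phi> \<and> wstar_cyclically_monotone \<Phi> \<and>
     (\<forall>\<Psi>. wstar_cyclically_monotone \<Psi> \<and> (\<forall>xs. \<Phi> xs \<subseteq> \<Psi> xs) \<longrightarrow> \<Psi> = \<Phi>)"

end

theory Submission
  imports Defs
begin

lemma wstar_topspace: "topspace (wstar_topology :: ('a::real_normed_vector \<Rightarrow>\<^sub>L real) topology) = UNIV"
  unfolding wstar_topology_def topology_generated_by_topspace
  by (rule ccontr) (auto intro: exI[of _ 0] dest!: spec[of _ UNIV])

lemma wstar_open_basic:
  assumes "open U"
  shows "openin (wstar_topology :: ('a::real_normed_vector \<Rightarrow>\<^sub>L real) topology) {xs. blinfun_apply xs x \<in> U}"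
  unfolding wstar_topology_def by (rule topology_generated_by_Basis) (use assms in blast)

lemma wstar_open_gt:
  "openin (wstar_topology :: ('a::real_normed_vector \<Rightarrow>\<^sub>L real) topology) {y. c < ereal (K + blinfun_apply y q)}"
proof -
  have "open {r::real. c < ereal (K + r)}"
    by (rule open_Collect_less) (auto intro!: continuous_intros)
  from wstar_open_basic[OF this, of q] show ?thesis by simp
qed

definition Lc :: "nat \<Rightarrow> (nat \<Rightarrow> ('a::real_normed_vector \<Rightarrow>\<^sub>L real)) \<Rightarrow> (nat \<Rightarrow> 'a) \<Rightarrow> ('a \<Rightarrow>\<^sub>L real) \<Rightarrow> real" where
  "Lc n a p y = (\<Sum>k<n. blinfun_apply (a (Suc k) - a k) (p k)) + blinfun_apply (y - a n) (p n)"

definition Ch :: "(('a::real_normed_vector \<Rightarrow>\<^sub>L real) \<Rightarrow> 'a set) \<Rightarrow> ('a \<Rightarrow>\<^sub>L real) \<Rightarrow> 'a \<Rightarrow>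
   (nat \<times> (nat \<Rightarrow> ('a \<Rightarrow>\<^sub>L real)) \<times> (nat \<Rightarrow> 'a)) set" where
  "Ch \<Phi> a0 p0 = {(n,a,p). a 0 = a0 \<and> p 0 = p0 \<and> (\<forall>k\<le>n. p k \<in> \<Phi> (a k))}"

definition rg where
  "rg \<Phi> a0 p0 y = (SUP c\<in>Ch \<Phi> a0 p0. ereal (case c of (n,a,p) \<Rightarrow> Lc n a p y))"

lemma Lc_alt: "Lc n a p y = Lc n a p 0 + blinfun_apply y (p n)"
  unfolding Lc_def by (simp add: blinfun.diff_left blinfun.minus_left)

lemma rg_ge: "(n,a,p) \<in> Ch \<Phi> a0 p0 \<Longrightarrow> ereal (Lc n a p y) \<le> rg \<Phi> a0 p0 y"
  unfolding rg_def by (rule SUP_upper2) auto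

lemma Ch_triv: "p0 \<in> \<Phi> a0 \<Longrightarrow> (0, \<lambda>_. a0, \<lambda>_. p0) \<in> Ch \<Phi> a0 p0"
  unfolding Ch_def by auto

lemma rg_not_minf: "p0 \<in> \<Phi> a0 \<Longrightarrow> rg \<Phi> a0 p0 y \<noteq> -\<infinity>"
  using rg_ge[OF Ch_triv, of p0 \<Phi> a0 y] by auto

lemma rg_convex: "p0 \<in> \<Phi> a0 \<Longrightarrow> convex_efun (rg \<Phi> a0 p0)"
  unfolding convex_efun_def
proof (intro allI impI)
  fix x y :: "'a \<Rightarrow>\<^sub>L real" and t :: real
  assume t: "0 < t \<and> t < 1"
  show "rg \<Phi> a0 p0 ((1 - t) *\<^sub>R x + t *\<^sub>R y) \<le> ereal (1 - t) * rg \<Phi> a0 p0 x + ereal t * rg \<Phi> a0 p0 y"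
    unfolding rg_def[of _ _ _ "(1 - t) *\<^sub>R x + t *\<^sub>R y"]
  proof (rule SUP_least)
    fix cc assume cc: "cc \<in> Ch \<Phi> a0 p0"
    obtain n a p where ccd: "cc = (n,a,p)" by (cases cc) auto
    have c: "(n, a, p) \<in> Ch \<Phi> a0 p0" using cc ccd by simp
    have "Lc n a p ((1 - t) *\<^sub>R x + t *\<^sub>R y) = (1 - t) * Lc n a p x + t * Lc n a p y"
      apply (subst (1 2 3) Lc_alt) by (simp add: blinfun.add_left blinfun.diff_left blinfun.scaleR_left algebra_simps)
    hence "ereal (Lc n a p ((1 - t) *\<^sub>R x + t *\<^sub>R y)) = ereal (1 - t) * ereal (Lc n a p x) + ereal t * ereal (Lc n a p y)"
      by simp
    also have "\<dots> \<le> ereal (1 - t) * rg \<Phi> a0 p0 x + ereal t * rg \<Phi> a0 p0 y"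
      apply (rule add_mono; rule ereal_mult_left_mono)
      using rg_ge[OF c] t by auto
    finally show "ereal (case cc of (n, a, p) \<Rightarrow> Lc n a p ((1 - t) *\<^sub>R x + t *\<^sub>R y))
         \<le> ereal (1 - t) * rg \<Phi> a0 p0 x + ereal t * rg \<Phi> a0 p0 y" using ccd by simp
  qed
qed

lemma wstar_open_Lc: "openin wstar_topology {y. c < ereal (Lc n a p y)}"
proof -
  have "{y. c < ereal (Lc n a p y)} = {y. c < ereal (Lc n a p 0 + blinfun_apply y (p n))}"
    by (metis Lc_alt)
  thus ?thesis using wstar_open_gt by metis
qed

lemma rg_lsc: "p0 \<in> \<Phi> a0 \<Longrightarrow> wstar_lsc (rg \<Phi> a0 p0)"
  unfolding wstar_lsc_def
proof
  fix c :: ereal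
  have eq: "UNIV - {xs. rg \<Phi> a0 p0 xs \<le> c} =
    (\<Union>(n,a,p)\<in>Ch \<Phi> a0 p0. {y. c < ereal (Lc n a p y)})"
    by (auto simp: rg_def SUP_le_iff not_le split: prod.splits)
  have "openin wstar_topology (UNIV - {xs. rg \<Phi> a0 p0 xs \<le> c})"
    unfolding eq by (rule openin_Union) (auto intro: wstar_open_Lc)
  thus "closedin wstar_topology {xs. rg \<Phi> a0 p0 xs \<le> c}"
    by (simp add: closedin_def wstar_topspace)
qed

lemma rg_a0:
  assumes cm: "wstar_cyclically_monotone \<Phi>"
  shows "rg \<Phi> a0 p0 a0 \<le> 0"
  unfolding rg_def
proof (rule SUP_least)
  fix cc assume cc: "cc \<in> Ch \<Phi> a0 p0"
  obtain n a p where ccd: "cc = (n,a,p)" by (cases cc) auto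
  have c: "a 0 = a0" "p 0 = p0" "\<forall>k\<le>n. p k \<in> \<Phi> (a k)" using cc ccd by (auto simp: Ch_def)
  have "Lc n a p a0 \<le> 0"
  proof (cases n)
    case 0 thus ?thesis using c by (simp add: Lc_def)
  next
    case (Suc m)
    have "0 \<le> (\<Sum>k<Suc n. blinfun_apply (a k - a (Suc k mod Suc n)) (p k))"
      using cm unfolding wstar_cyclically_monotone_def
    proof (elim allE impE)
      show "2 \<le> Suc n" using Suc by simp
      show "\<forall>k<Suc n. p k \<in> \<Phi> (a k)" using c(3) by (simp add: less_Suc_eq_le)
    qed
    also have "\<dots> = (\<Sum>k<n. blinfun_apply (a k - a (Suc k)) (p k)) + blinfun_apply (a n - a 0) (p n)"
      by (simp add: sum.lessThan_Suc)
    also have "\<dots> = - Lc n a p a0"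
      unfolding Lc_def c(1)[symmetric]
      by (simp add: blinfun.diff_left sum_subtractf)
    finally show ?thesis by simp
  qed
  thus "ereal (case cc of (n, a, p) \<Rightarrow> Lc n a p a0) \<le> 0" using ccd by simp
qed

lemma Ch_ext:
  assumes c: "(n,a,p) \<in> Ch \<Phi> a0 p0" and q: "q \<in> \<Phi> y"
  shows "(Suc n, a(Suc n := y), p(Suc n := q)) \<in> Ch \<Phi> a0 p0"
    and "Lc (Suc n) (a(Suc n := y)) (p(Suc n := q)) z = Lc n a p y + blinfun_apply (z - y) q"
  using c q by (auto simp: Ch_def le_Suc_eq Lc_def)

lemma rg_sub:
  assumes q: "q \<in> \<Phi> y" and p0: "p0 \<in> \<Phi> a0"
  shows "rg \<Phi> a0 p0 y + ereal (blinfun_apply (z - y) q) \<le> rg \<Phi> a0 p0 z"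
proof -
  have "(SUP c\<in>Ch \<Phi> a0 p0. ereal (case c of (n,a,p) \<Rightarrow> Lc n a p y) + ereal (blinfun_apply (z - y) q))
        \<le> rg \<Phi> a0 p0 z"
  proof (rule SUP_least)
    fix cc assume cc: "cc \<in> Ch \<Phi> a0 p0"
    obtain n a p where ccd: "cc = (n,a,p)" by (cases cc) auto
    have c: "(n,a,p) \<in> Ch \<Phi> a0 p0" using cc ccd by simp
    have "ereal (Lc n a p y) + ereal (blinfun_apply (z - y) q) = ereal (Lc (Suc n) (a(Suc n := y)) (p(Suc n := q)) z)"
      using Ch_ext(2)[OF c q] by simp
    also have "\<dots> \<le> rg \<Phi> a0 p0 z" by (rule rg_ge[OF Ch_ext(1)[OF c q]])
    finally show "ereal (case cc of (n,a,p) \<Rightarrow> Lc n a p y) + ereal (blinfun_apply (z - y) q) \<le> rg \<Phi> a0 p0 z"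
      using ccd by simp
  qed
  moreover have "(SUP c\<in>Ch \<Phi> a0 p0. ereal (case c of (n,a,p) \<Rightarrow> Lc n a p y) + ereal (blinfun_apply (z - y) q))
     = rg \<Phi> a0 p0 y + ereal (blinfun_apply (z - y) q)"
    unfolding rg_def
    by (rule SUP_ereal_add_left) (use Ch_triv[of p0 \<Phi> a0, OF p0] in auto)
  ultimately show ?thesis by simp
qed

lemma sum_rot: "(\<Sum>k<n. f (Suc k mod n)) = (\<Sum>k<n. (f k::real))"
proof (cases n)
  case 0 thus ?thesis by simp
next
  case (Suc m)
  have "(\<Sum>k<Suc m. f (Suc k mod Suc m)) = (\<Sum>k<m. f (Suc k)) + f 0"
    by (simp add: sum.lessThan_Suc)
  also have "\<dots> = (\<Sum>k<Suc m. f k)" by (subst sum.lessThan_Suc_shift) simp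
  finally show ?thesis using Suc by simp
qed

lemma subdiff_cm:
  assumes pr: "\<forall>x. g x \<noteq> -\<infinity>"
  shows "wstar_cyclically_monotone (subdiff_X g)"
  unfolding wstar_cyclically_monotone_def
proof (intro allI impI)
  fix n :: nat and xs :: "nat \<Rightarrow> ('a \<Rightarrow>\<^sub>L real)" and x :: "nat \<Rightarrow> 'a"
  assume n: "2 \<le> n" and h: "\<forall>k<n. x k \<in> subdiff_X g (xs k)"
  define r where "r k = real_of_ereal (g (xs k))" for k
  have fin: "g (xs k) = ereal (r k)" if "k < n" for k
  proof -
    have "g (xs k) < \<infinity>" using h that by (auto simp: subdiff_X_def split: if_splits)
    thus ?thesis using pr[rule_format, of "xs k"] unfolding r_def by (cases "g (xs k)") auto
  qed
  have ineq: "blinfun_apply (xs (Suc k mod n) - xs k) (x k) \<le> r (Suc k mod n) - r k" if "k < n" for k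
  proof -
    have m: "Suc k mod n < n" using n by simp
    have "ereal (blinfun_apply (xs (Suc k mod n) - xs k) (x k)) \<le> g (xs (Suc k mod n)) - g (xs k)"
      using h that by (auto simp: subdiff_X_def split: if_splits)
    thus ?thesis using fin[OF that] fin[OF m] by simp
  qed
  have "(\<Sum>k<n. blinfun_apply (xs (Suc k mod n) - xs k) (x k)) \<le> (\<Sum>k<n. r (Suc k mod n) - r k)"
    by (rule sum_mono) (use ineq in auto)
  also have "\<dots> = 0" by (simp add: sum_subtractf sum_rot)
  finally have "(\<Sum>k<n. blinfun_apply (xs (Suc k mod n) - xs k) (x k)) \<le> 0" .
  moreover have "(\<Sum>k<n. blinfun_apply (xs k - xs (Suc k mod n)) (x k)) = - (\<Sum>k<n. blinfun_apply (xs (Suc k mod n) - xs k) (x k))"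
    by (simp add: blinfun.diff_left sum_subtractf)
  ultimately show "0 \<le> (\<Sum>k<n. blinfun_apply (xs k - xs (Suc k mod n)) (x k))" by simp
qed

lemma Phi_sub:
  assumes cm: "wstar_cyclically_monotone \<Phi>" and p0: "p0 \<in> \<Phi> a0" and q: "q \<in> \<Phi> y"
  shows "q \<in> subdiff_X (rg \<Phi> a0 p0) y"
proof -
  let ?g = "rg \<Phi> a0 p0"
  have "?g y + ereal (blinfun_apply (a0 - y) q) \<le> 0"
    using rg_sub[OF q p0, of a0] rg_a0[OF cm, of a0 p0] by simp
  hence "?g y \<noteq> \<infinity>" by auto
  then obtain v where v: "?g y = ereal v" using rg_not_minf[of p0 \<Phi> a0, OF p0, of y] by (cases "?g y") auto
  have "ereal (blinfun_apply (z - y) q) \<le> ?g z - ?g y" for z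
    using rg_sub[OF q p0, of z] rg_not_minf[of p0 \<Phi> a0, OF p0, of z] unfolding v
    by (cases "?g z") auto
  thus ?thesis unfolding subdiff_X_def using v by auto
qed

theorem mainTheorem10:
  fixes \<Phi> :: "('a::banach \<Rightarrow>\<^sub>L real) \<Rightarrow> 'a set"
  assumes "wstar_max_cyclically_monotone \<Phi>"
    and "\<exists>xs. \<Phi> xs \<noteq> {}"
  shows "\<exists>g :: ('a \<Rightarrow>\<^sub>L real) \<Rightarrow> ereal. proper_fun g \<and> convex_efun g \<and> wstar_lsc g \<and>
           (\<forall>xs. \<Phi> xs = subdiff_X g xs)"
proof -
  obtain a0 p0 where p0: "p0 \<in> \<Phi> a0" using assms(2) by blast
  have cm: "wstar_cyclically_monotone \<Phi>"
    and mx: "\<And>\<Psi>. wstar_cyclically_monotone \<Psi> \<Longrightarrow> (\<forall>xs. \<Phi> xs \<subseteq> \<Psi> xs) \<Longrightarrow> \<Psi> = \<Phi>"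
    using assms(1) unfolding wstar_max_cyclically_monotone_def by blast+
  let ?g = "rg \<Phi> a0 p0"
  have nm: "\<forall>x. ?g x \<noteq> -\<infinity>" using rg_not_minf[of p0 \<Phi> a0, OF p0] by blast
  have "?g a0 \<noteq> \<infinity>"
  proof
    assume "?g a0 = \<infinity>" thus False using rg_a0[OF cm, of a0 p0] by simp
  qed
  hence pr: "proper_fun ?g"
    unfolding proper_fun_def using nm by blast
  have "subdiff_X ?g = \<Phi>"
    by (rule mx[OF subdiff_cm[OF nm]]) (use Phi_sub[OF cm p0] in blast)
  thus ?thesis using pr rg_convex[of p0 \<Phi> a0, OF p0] rg_lsc[of p0 \<Phi> a0, OF p0] by metis
qed

end
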